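(* Let $A$ be a prime algebra (over a field $\Bbbk$ of characteristic $0$) which is a finite module over its center $Z$, and let $\phi\in\mathrm{Oz}(A)$. (1) There is a regular normal element $a\in A$ such that $\phi=\eta_a$, i.e. $a\phi(x)=xa$ for all $x\in A$. (2) If further $A$ is a $G$-graded domain, where $G$ is an ordered abelian group, then there is a nonzero normal homogeneous element $a\in A$ with $\phi=\eta_a$. (3) If further $A$ is a $\mathbb{Z}^n$-graded domain, then $\mathrm{Oz}_{gr}(A)=\mathrm{Oz}(A)$.
   Context: $\mathrm{Oz}(A)$ is the group of algebra automorphisms of $A$ fixing $Z$ pointwise; $\mathrm{Oz}_{gr}(A)$ is the subgroup of those that are graded (preserve the given grading). For a regular normal element $w$, $\eta_w:A\to A$ is the automorphism $\eta_w(x)=w^{-1}xw$, i.e. the unique element with $w\,\eta_w(x)=xw$. *)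

theory Defs
  imports "HOL-Analysis.Finite_Cartesian_Product"
begin

definition center :: "'a::ring_1 set" where
  "center = {z. \<forall>x. z * x = x * z}"

definition k_algebra :: "('k::field \<Rightarrow> 'a::ring_1) \<Rightarrow> bool" where
  "k_algebra \<iota> \<longleftrightarrow> \<iota> 1 = 1 \<and> (\<forall>a b. \<iota> (a + b) = \<iota> a + \<iota> b)
     \<and> (\<forall>a b. \<iota> (a * b) = \<iota> a * \<iota> b) \<and> (\<forall>c. \<iota> c \<in> center)"

definition prime_ring :: "'a::ring_1 itself \<Rightarrow> bool" where
  "prime_ring _ \<longleftrightarrow> (0::'a) \<noteq> 1 \<and>
     (\<forall>a b::'a. (\<forall>r. a * r * b = 0) \<longrightarrow> a = 0 \<or> b = 0)"

definition is_domain :: "'a::ring_1 itself \<Rightarrow> bool" where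
  "is_domain _ \<longleftrightarrow> (0::'a) \<noteq> 1 \<and> (\<forall>a b::'a. a * b = 0 \<longrightarrow> a = 0 \<or> b = 0)"

definition finite_over_center :: "'a::ring_1 itself \<Rightarrow> bool" where
  "finite_over_center _ \<longleftrightarrow> (\<exists>S::'a set. finite S \<and>
     (\<forall>x. \<exists>c. (\<forall>s\<in>S. c s \<in> center) \<and> x = (\<Sum>s\<in>S. c s * s)))"

definition regular_elem :: "'a::ring_1 \<Rightarrow> bool" where
  "regular_elem a \<longleftrightarrow> (\<forall>x. (a * x = 0 \<longrightarrow> x = 0) \<and> (x * a = 0 \<longrightarrow> x = 0))"

definition normal_elem :: "'a::ring_1 \<Rightarrow> bool" where
  "normal_elem a \<longleftrightarrow> {a * x | x. True} = {x * a | x. True}"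

definition Oz :: "('k::field \<Rightarrow> 'a::ring_1) \<Rightarrow> ('a \<Rightarrow> 'a) set" where
  "Oz \<iota> = {\<phi>. bij \<phi> \<and> (\<forall>x y. \<phi> (x + y) = \<phi> x + \<phi> y) \<and> (\<forall>x y. \<phi> (x * y) = \<phi> x * \<phi> y)
     \<and> \<phi> 1 = 1 \<and> (\<forall>c x. \<phi> (\<iota> c * x) = \<iota> c * \<phi> x) \<and> (\<forall>z\<in>center. \<phi> z = z)}"

definition graded_algebra :: "('k::field \<Rightarrow> 'a::ring_1) \<Rightarrow> ('g::ab_group_add \<Rightarrow> 'a set) \<Rightarrow> bool" where
  "graded_algebra \<iota> Ag \<longleftrightarrow>
     (\<forall>g. 0 \<in> Ag g \<and> (\<forall>x\<in>Ag g. \<forall>y\<in>Ag g. x + y \<in> Ag g) \<and> (\<forall>c. \<forall>x\<in>Ag g. \<iota> c * x \<in> Ag g))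
     \<and> (\<forall>g h. \<forall>x\<in>Ag g. \<forall>y\<in>Ag h. x * y \<in> Ag (g + h))
     \<and> (\<forall>x. \<exists>!c. finite {g. c g \<noteq> 0} \<and> (\<forall>g. c g \<in> Ag g) \<and> x = (\<Sum>g\<in>{g. c g \<noteq> 0}. c g))"

definition homogeneous :: "('g \<Rightarrow> 'a set) \<Rightarrow> 'a \<Rightarrow> bool" where
  "homogeneous Ag a \<longleftrightarrow> (\<exists>g. a \<in> Ag g)"

definition Oz_gr :: "('k::field \<Rightarrow> 'a::ring_1) \<Rightarrow> ('g \<Rightarrow> 'a set) \<Rightarrow> ('a \<Rightarrow> 'a) set" where
  "Oz_gr \<iota> Ag = {\<phi> \<in> Oz \<iota>. \<forall>g. \<phi> ` Ag g = Ag g}"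

end

theory Submission
  imports Defs "HOL-Library.Function_Algebras" "HOL-Computational_Algebra.Polynomial"
begin


lemma center_comm: "z \<in> center \<Longrightarrow> x * z = z * (x::'a::ring_1)"
  by (simp add: center_def)

lemma center_lcomm: "z \<in> center \<Longrightarrow> x * (z * y) = z * (x * (y::'a::ring_1))"
proof -
  assume "z \<in> center"
  then have "x * z = z * x" by (rule center_comm)
  then show ?thesis by (simp add: mult.assoc[symmetric])
qed

definition Sreg :: "'a::ring_1 set" where
  "Sreg = {s. s \<in> center \<and> (\<forall>x. s * x = 0 \<longrightarrow> x = 0)}"

lemma Sreg_center: "s \<in> Sreg \<Longrightarrow> s \<in> center" by (simp add: Sreg_def)
lemma Sreg_reg: "s \<in> Sreg \<Longrightarrow> s * x = 0 \<Longrightarrow> x = 0" by (simp add: Sreg_def)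
lemma Sreg_reg': "s \<in> Sreg \<Longrightarrow> x * s = 0 \<Longrightarrow> x = 0"
proof -
  assume a: "s \<in> Sreg" "x * s = 0"
  then have "s * x = 0" using center_comm[OF Sreg_center[OF a(1)], of x] by simp
  then show ?thesis by (rule Sreg_reg[OF a(1)])
qed
lemma Sreg_one: "1 \<in> Sreg" by (simp add: Sreg_def center_def)
lemma center_mult: "s \<in> center \<Longrightarrow> t \<in> center \<Longrightarrow> s * t \<in> center"
proof -
  assume a: "s \<in> center" "t \<in> center"
  show ?thesis unfolding center_def
  proof
    show "\<forall>x. s * t * x = x * (s * t)"
    proof
      fix x
      have "s * t * x = s * (x * t)" using center_comm[OF a(2), of x] by (simp add: mult.assoc)
      also have "\<dots> = (s * x) * t" by (simp add: mult.assoc)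
      also have "\<dots> = x * s * t" using center_comm[OF a(1), of x] by simp
      finally show "s * t * x = x * (s * t)" by (simp add: mult.assoc)
    qed
  qed
qed
lemma Sreg_mult: "s \<in> Sreg \<Longrightarrow> t \<in> Sreg \<Longrightarrow> s * t \<in> Sreg"
proof -
  assume a: "s \<in> Sreg" "t \<in> Sreg"
  have "\<forall>x. s * t * x = 0 \<longrightarrow> x = 0"
    using a by (metis Sreg_reg mult.assoc)
  then show ?thesis using a center_mult Sreg_center unfolding Sreg_def by blast
qed
lemma Sreg_nz: "s \<in> Sreg \<Longrightarrow> s \<noteq> (0::'a::ring_1)"
  using Sreg_reg[of s 1] by auto
lemma Sreg_cancel: "s \<in> Sreg \<Longrightarrow> x * s = y * s \<Longrightarrow> x = y"
  by (metis Sreg_reg' eq_iff_diff_eq_0 left_diff_distrib)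

definition qrel :: "'a::ring_1 \<times> 'a \<Rightarrow> 'a \<times> 'a \<Rightarrow> bool" where
  "qrel x y \<longleftrightarrow> snd x \<in> Sreg \<and> snd y \<in> Sreg \<and> fst x * snd y = fst y * snd x"

lemma qrel_iff [simp]:
  "qrel x y \<longleftrightarrow> snd x \<in> Sreg \<and> snd y \<in> Sreg \<and> fst x * snd y = fst y * snd x"
  by (simp add: qrel_def)

lemma part_equivp_qrel: "part_equivp (qrel :: 'a::ring_1 \<times> 'a \<Rightarrow> _)"
proof (rule part_equivpI)
  show "\<exists>x::'a \<times> 'a. qrel x x" by (rule exI[of _ "(0,1)"]) (simp add: Sreg_one)
  show "symp (qrel :: 'a \<times> 'a \<Rightarrow> _)" by (simp add: symp_def)
  show "transp (qrel :: 'a \<times> 'a \<Rightarrow> _)"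
  proof (rule transpI, unfold split_paired_all)
    fix a s b t c u :: 'a
    assume A: "qrel (a, s) (b, t)" and B: "qrel (b, t) (c, u)"
    have cs: "s \<in> center" "t \<in> center" "u \<in> center" using A B by (auto simp: Sreg_center)
    have "(a * u) * t = (a * t) * u" using cs by (simp add: mult.assoc center_comm)
    also have "\<dots> = b * s * u" using A by simp
    also have "\<dots> = (b * u) * s" using cs by (simp add: mult.assoc center_comm)
    also have "\<dots> = c * t * s" using B by simp
    also have "\<dots> = (c * s) * t" using cs by (simp add: mult.assoc center_comm)
    finally have "a * u = c * s" using A by (auto intro: Sreg_cancel)
    then show "qrel (a, s) (c, u)" using A B by simp
  qed
qed

quotient_type (overloaded) 'a Q = "'a::ring_1 \<times> 'a" / partial: "qrel"
  by (rule part_equivp_qrel)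

lemma cen_facts:
  assumes "s \<in> Sreg"
  shows "x * s = s * x" "x * (s * y) = s * (x * y)"
  using assms center_comm center_lcomm Sreg_center by blast+

lemma qrel_refl: "s \<in> Sreg \<Longrightarrow> qrel (a, s) (a, s)" by simp

instantiation Q :: (ring_1) ring_1
begin

lift_definition zero_Q :: "'a Q" is "(0, 1)" by (simp add: Sreg_one)
lift_definition one_Q :: "'a Q" is "(1, 1)" by (simp add: Sreg_one)

lift_definition plus_Q :: "'a Q \<Rightarrow> 'a Q \<Rightarrow> 'a Q"
  is "\<lambda>x y. (fst x * snd y + fst y * snd x, snd x * snd y)"
proof (unfold split_paired_all, simp only: fst_conv snd_conv qrel_iff, elim conjE, intro conjI)
  fix a s a' s' b t b' t' :: 'a
  assume h: "s \<in> Sreg" "s' \<in> Sreg" "a * s' = a' * s" "t \<in> Sreg" "t' \<in> Sreg" "b * t' = b' * t"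
  show "s * t \<in> Sreg" "s' * t' \<in> Sreg" using h by (simp_all add: Sreg_mult)
  have "(a * t + b * s) * (s' * t') = (a * s') * (t * t') + (b * t') * (s * s')"
    using h(1,2,4,5) by (simp add: algebra_simps cen_facts)
  also have "\<dots> = (a' * s) * (t * t') + (b' * t) * (s * s')" by (simp only: h(3,6))
  also have "\<dots> = (a' * t' + b' * s') * (s * t)"
    using h(1,2,4,5) by (simp add: algebra_simps cen_facts)
  finally show "(a * t + b * s) * (s' * t') = (a' * t' + b' * s') * (s * t)" .
qed

lift_definition uminus_Q :: "'a Q \<Rightarrow> 'a Q" is "\<lambda>x. (- fst x, snd x)"
  by auto

definition minus_Q :: "'a Q \<Rightarrow> 'a Q \<Rightarrow> 'a Q" where "minus_Q x y = x + - y"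

lift_definition times_Q :: "'a Q \<Rightarrow> 'a Q \<Rightarrow> 'a Q"
  is "\<lambda>x y. (fst x * fst y, snd x * snd y)"
proof (unfold split_paired_all, simp only: fst_conv snd_conv qrel_iff, elim conjE, intro conjI)
  fix a s a' s' b t b' t' :: 'a
  assume h: "s \<in> Sreg" "s' \<in> Sreg" "a * s' = a' * s" "t \<in> Sreg" "t' \<in> Sreg" "b * t' = b' * t"
  show "s * t \<in> Sreg" "s' * t' \<in> Sreg" using h by (simp_all add: Sreg_mult)
  have "(a * b) * (s' * t') = (a * s') * (b * t')"
    using cen_facts(2)[OF h(2), of b t'] by (simp add: mult.assoc)
  also have "\<dots> = (a' * s) * (b' * t)" by (simp only: h(3,6))
  also have "\<dots> = (a' * b') * (s * t)"
    using cen_facts(2)[OF h(1), of b' t] by (simp add: mult.assoc)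
  finally show "(a * b) * (s' * t') = (a' * b') * (s * t)" .
qed

instance
proof
  fix x y z :: "'a Q"
  show "x + y + z = x + (y + z)"
    by transfer (auto simp: algebra_simps cen_facts Sreg_mult)
  show "x + y = y + x"
    by transfer (auto simp: algebra_simps cen_facts Sreg_mult)
  show "0 + x = x"
    by transfer (auto simp: algebra_simps cen_facts Sreg_mult)
  show "- x + x = 0"
    by transfer (auto simp: algebra_simps cen_facts Sreg_mult Sreg_one)
  show "x - y = x + - y" by (simp add: minus_Q_def)
  show "x * y * z = x * (y * z)"
    by transfer (auto simp: algebra_simps cen_facts Sreg_mult)
  show "1 * x = x"
    by transfer (auto simp: algebra_simps cen_facts Sreg_mult)
  show "x * 1 = x"
    by transfer (auto simp: algebra_simps cen_facts Sreg_mult)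
  show "(x + y) * z = x * z + y * z"
    by transfer (auto simp: algebra_simps cen_facts Sreg_mult)
  show "x * (y + z) = x * y + x * z"
    by transfer (auto simp: algebra_simps cen_facts Sreg_mult)
  show "(0::'a Q) \<noteq> 1"
    by transfer (simp add: Sreg_one)
qed

end


lift_definition frac :: "'a::ring_1 \<Rightarrow> 'a \<Rightarrow> 'a Q"
  is "\<lambda>a s. if s \<in> Sreg then (a, s) else (0, 1)"
  by (auto simp: Sreg_one)

lemma Q_cases [cases type: Q]:
  obtains a s where "q = frac a s" "s \<in> Sreg"
  by transfer auto

lemma frac_eq: "s \<in> Sreg \<Longrightarrow> t \<in> Sreg \<Longrightarrow> frac a s = frac b t \<longleftrightarrow> a * t = b * s"
  by transfer simp

lemma zero_frac: "0 = frac 0 1" by transfer (simp add: Sreg_one)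
lemma one_frac: "1 = frac 1 1" by transfer (simp add: Sreg_one)

lemma frac_add: "s \<in> Sreg \<Longrightarrow> t \<in> Sreg \<Longrightarrow> frac a s + frac b t = frac (a * t + b * s) (s * t)"
  by transfer (simp add: Sreg_mult)

lemma frac_mult: "s \<in> Sreg \<Longrightarrow> t \<in> Sreg \<Longrightarrow> frac a s * frac b t = frac (a * b) (s * t)"
  by transfer (simp add: Sreg_mult)

lemma frac_uminus: "s \<in> Sreg \<Longrightarrow> - frac a s = frac (- a) s"
  by transfer simp

lemma frac_diff: "s \<in> Sreg \<Longrightarrow> t \<in> Sreg \<Longrightarrow> frac a s - frac b t = frac (a * t - b * s) (s * t)"
proof -
  assume h: "s \<in> Sreg" "t \<in> Sreg"
  have "frac a s - frac b t = frac a s + frac (-b) t" using h by (simp add: frac_uminus)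
  also have "\<dots> = frac (a * t - b * s) (s * t)" using h by (simp add: frac_add)
  finally show ?thesis .
qed

lemma frac_zero_iff: "s \<in> Sreg \<Longrightarrow> frac a s = 0 \<longleftrightarrow> a = 0"
  by (simp add: zero_frac frac_eq Sreg_one)

definition emb :: "'a::ring_1 \<Rightarrow> 'a Q" where "emb a = frac a 1"

lemma emb_add: "emb (a + b) = emb a + emb b"
  by (simp add: emb_def frac_add Sreg_one)
lemma emb_mult: "emb (a * b) = emb a * emb b"
  by (simp add: emb_def frac_mult Sreg_one)
lemma emb_uminus: "emb (- a) = - emb a"
  by (simp add: emb_def frac_uminus Sreg_one)
lemma emb_diff: "emb (a - b) = emb a - emb b"
  by (simp add: emb_def frac_diff Sreg_one)
lemma emb_0: "emb 0 = 0" by (simp add: emb_def zero_frac)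
lemma emb_1: "emb 1 = 1" by (simp add: emb_def one_frac)
lemma emb_inj: "emb a = emb b \<longleftrightarrow> a = b"
  by (simp add: emb_def frac_eq Sreg_one)
lemma emb_sum: "emb (sum f A) = (\<Sum>x\<in>A. emb (f x))"
  by (induction A rule: infinite_finite_induct) (simp_all add: emb_0 emb_add)

lemma frac_emb: "s \<in> Sreg \<Longrightarrow> frac a s * emb s = emb a"
  by (simp add: emb_def frac_mult Sreg_one frac_eq)

lemma emb_frac: "s \<in> Sreg \<Longrightarrow> emb s * frac a s = emb a"
  using cen_facts(1)[of s a] by (simp add: emb_def frac_mult Sreg_one frac_eq)

lemma frac_as: "s \<in> Sreg \<Longrightarrow> frac a s = emb a * frac 1 s"
  by (simp add: emb_def frac_mult Sreg_one)

lemma emb_center: "z \<in> center \<Longrightarrow> emb z \<in> center"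
proof -
  assume z: "z \<in> center"
  show ?thesis unfolding center_def
  proof (intro CollectI allI)
    fix q :: "'a Q"
    obtain a s where q: "q = frac a s" "s \<in> Sreg" by (cases q)
    show "emb z * q = q * emb z"
      using q center_comm[OF z, of a] by (simp add: emb_def frac_mult Sreg_one frac_eq)
  qed
qed

lemma center_emb: "emb z \<in> center \<Longrightarrow> z \<in> center"
proof -
  assume "emb z \<in> center"
  then have "emb z * emb x = emb x * emb z" for x by (simp add: center_def)
  then have "z * x = x * z" for x by (metis emb_mult emb_inj)
  then show ?thesis by (simp add: center_def)
qed

lemma frac1_center: "s \<in> Sreg \<Longrightarrow> frac 1 s \<in> center"
proof -
  assume s: "s \<in> Sreg"
  show ?thesis unfolding center_def
  proof (intro CollectI allI)
    fix q :: "'a Q"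
    obtain a t where q: "q = frac a t" "t \<in> Sreg" by (cases q)
    show "frac 1 s * q = q * frac 1 s"
      using q s cen_facts(1)[OF s, of a] cen_facts(1)[OF s, of t]
      by (simp add: frac_mult frac_eq Sreg_mult mult.assoc)
  qed
qed

lemma center_frac: "q \<in> center \<Longrightarrow> \<exists>z t. z \<in> center \<and> t \<in> Sreg \<and> q = frac z t"
proof -
  assume qc: "q \<in> center"
  obtain a s where q: "q = frac a s" "s \<in> Sreg" by (cases q)
  have "emb a = q * emb s" using q by (simp add: frac_emb)
  moreover have "q * emb s \<in> center"
    using qc emb_center[OF Sreg_center[OF q(2)]] center_mult by blast
  ultimately have "a \<in> center" using center_emb by metis
  then show ?thesis using q by blast
qed


lemma center_0: "0 \<in> center" by (simp add: center_def)
lemma center_1: "1 \<in> center" by (simp add: center_def)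
lemma center_add: "a \<in> center \<Longrightarrow> b \<in> center \<Longrightarrow> a + b \<in> center"
  by (simp add: center_def algebra_simps)
lemma center_uminus: "a \<in> center \<Longrightarrow> - a \<in> center"
  by (simp add: center_def)
lemma center_diff: "a \<in> center \<Longrightarrow> b \<in> center \<Longrightarrow> a - b \<in> center"
  by (simp add: center_def algebra_simps)

lemma prime_ringD: "prime_ring TYPE('a::ring_1) \<Longrightarrow> (\<And>r. (a::'a) * r * b = 0) \<Longrightarrow> a = 0 \<or> b = 0"
  unfolding prime_ring_def by blast

lemma prime_center_Sreg:
  assumes P: "prime_ring TYPE('a::ring_1)" and z: "(z::'a) \<in> center" "z \<noteq> 0"
  shows "z \<in> Sreg"
proof -
  have "x = 0" if "z * x = 0" for x
  proof -
    have "z * r * x = 0" for r using that center_comm[OF z(1), of r]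
      by (metis mult.assoc mult_zero_right)
    then show ?thesis using prime_ringD[OF P] z(2) by blast
  qed
  then show ?thesis using z by (simp add: Sreg_def)
qed

lemma prime_Q:
  assumes P: "prime_ring TYPE('a::ring_1)" and h: "\<And>r. (x::'a Q) * r * y = 0"
  shows "x = 0 \<or> y = 0"
proof -
  obtain a s where x: "x = frac a s" "s \<in> Sreg" by (cases x)
  obtain b t where y: "y = frac b t" "t \<in> Sreg" by (cases y)
  have "a * r * b = 0" for r
  proof -
    have "frac a s * frac r 1 * frac b t = 0" using h x y by simp
    then have "frac (a * r * b) (s * 1 * t) = 0" using x y by (simp add: frac_mult Sreg_one Sreg_mult)
    then show ?thesis using x y by (simp add: frac_zero_iff Sreg_one Sreg_mult)
  qed
  then have "a = 0 \<or> b = 0" using prime_ringD[OF P] by blast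
  then show ?thesis using x y by (auto simp: frac_zero_iff)
qed

lemma prime_Q_inverse:
  assumes P: "prime_ring TYPE('a::ring_1)" and q: "(q::'a Q) \<in> center" "q \<noteq> 0"
  shows "\<exists>r. r \<in> center \<and> r * q = 1 \<and> q * r = 1"
proof -
  obtain z t where zt: "z \<in> center" "t \<in> Sreg" "q = frac z t" using center_frac[OF q(1)] by blast
  have "z \<noteq> 0" using zt q(2) by (auto simp: frac_zero_iff)
  then have zS: "z \<in> Sreg" using prime_center_Sreg[OF P zt(1)] by blast
  have "frac t z * q = 1" using zt zS
    by (simp add: frac_mult one_frac frac_eq Sreg_one Sreg_mult center_comm[OF Sreg_center[OF zt(2)]])
  moreover have "q * frac t z = 1" using zt zS
    by (simp add: frac_mult one_frac frac_eq Sreg_one Sreg_mult center_comm[OF Sreg_center[OF zS]])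
  moreover have "frac t z \<in> center"
    using frac_as[OF zS, of t] emb_center[OF Sreg_center[OF zt(2)]] frac1_center[OF zS] center_mult
    by metis
  ultimately show ?thesis by blast
qed

definition qinv :: "'a::ring_1 Q \<Rightarrow> 'a Q" where
  "qinv q = (if \<exists>r. r \<in> center \<and> r * q = 1 \<and> q * r = 1 then (SOME r. r \<in> center \<and> r * q = 1 \<and> q * r = 1) else 0)"

lemma qinv_P:
  assumes P: "prime_ring TYPE('a::ring_1)" and q: "(q::'a Q) \<in> center" "q \<noteq> 0"
  shows "qinv q \<in> center \<and> qinv q * q = 1 \<and> q * qinv q = 1"
proof -
  have ex: "\<exists>r. r \<in> center \<and> r * q = 1 \<and> q * r = 1" using prime_Q_inverse[OF P q] .
  then have "qinv q = (SOME r. r \<in> center \<and> r * q = 1 \<and> q * r = 1)" by (simp add: qinv_def)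
  then show ?thesis using someI_ex[OF ex] by simp
qed

lemma qinv_0: "qinv (0::'a::ring_1 Q) = 0"
  unfolding qinv_def by auto

lemma qinv_center: "q \<in> center \<Longrightarrow> qinv (q::'a::ring_1 Q) \<in> center"
  unfolding qinv_def using center_0
  by (smt (verit, best) someI_ex)

section \<open>The scalar field\<close>

typedef (overloaded) 'a F = "if prime_ring TYPE('a::ring_1) then (center :: 'a Q set) else {0, 1}"
  by (rule exI[of _ 0]) (simp add: center_0)

lemma Rep_F_P: "prime_ring TYPE('a::ring_1) \<Longrightarrow> Rep_F (x :: 'a F) \<in> center"
  using Rep_F[of x] by simp
lemma Rep_F_nP: "\<not> prime_ring TYPE('a::ring_1) \<Longrightarrow> Rep_F (x :: 'a F) = 0 \<or> Rep_F x = 1"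
  using Rep_F[of x] by simp
lemma Abs_F_P: "prime_ring TYPE('a::ring_1) \<Longrightarrow> (q::'a Q) \<in> center \<Longrightarrow> Rep_F (Abs_F q :: 'a F) = q"
  by (rule Abs_F_inverse) simp
lemma Abs_F_01: "(q::'a::ring_1 Q) = 0 \<or> q = 1 \<Longrightarrow> Rep_F (Abs_F q :: 'a F) = q"
  by (rule Abs_F_inverse) (auto simp: center_0 center_1)

instantiation F :: (ring_1) field
begin

definition zero_F :: "'a F" where "zero_F = Abs_F 0"
definition one_F :: "'a F" where "one_F = Abs_F 1"
definition plus_F :: "'a F \<Rightarrow> 'a F \<Rightarrow> 'a F" where
  "plus_F x y = Abs_F (if prime_ring TYPE('a) then Rep_F x + Rep_F y else if Rep_F x = Rep_F y then 0 else 1)"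
definition uminus_F :: "'a F \<Rightarrow> 'a F" where
  "uminus_F x = Abs_F (if prime_ring TYPE('a) then - Rep_F x else Rep_F x)"
definition minus_F :: "'a F \<Rightarrow> 'a F \<Rightarrow> 'a F" where
  "minus_F x y = x + - y"
definition times_F :: "'a F \<Rightarrow> 'a F \<Rightarrow> 'a F" where
  "times_F x y = Abs_F (if prime_ring TYPE('a) then Rep_F x * Rep_F y else if Rep_F x = 1 \<and> Rep_F y = 1 then 1 else 0)"
definition inverse_F :: "'a F \<Rightarrow> 'a F" where
  "inverse_F x = Abs_F (if prime_ring TYPE('a) then qinv (Rep_F x) else Rep_F x)"
definition divide_F :: "'a F \<Rightarrow> 'a F \<Rightarrow> 'a F" where
  "divide_F x y = x * inverse y"

lemma Rep_F_0: "Rep_F (0::'a F) = 0"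
  unfolding zero_F_def by (simp add: Abs_F_01)
lemma Rep_F_1: "Rep_F (1::'a F) = 1"
  unfolding one_F_def by (simp add: Abs_F_01)
lemma Rep_F_plus: "Rep_F (x + y :: 'a F) = (if prime_ring TYPE('a) then Rep_F x + Rep_F y else if Rep_F x = Rep_F y then 0 else 1)"
  unfolding plus_F_def by (simp add: Abs_F_P Abs_F_01 Rep_F_P center_add)
lemma Rep_F_uminus: "Rep_F (- x :: 'a F) = (if prime_ring TYPE('a) then - Rep_F x else Rep_F x)"
  unfolding uminus_F_def
  by (cases "prime_ring TYPE('a)") (simp_all add: Abs_F_P Rep_F_P center_uminus Abs_F_01 Rep_F_nP)
lemma Rep_F_times: "Rep_F (x * y :: 'a F) = (if prime_ring TYPE('a) then Rep_F x * Rep_F y else if Rep_F x = 1 \<and> Rep_F y = 1 then 1 else 0)"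
  unfolding times_F_def by (simp add: Abs_F_P Abs_F_01 Rep_F_P center_mult)
lemma Rep_F_inverse: "Rep_F (inverse x :: 'a F) = (if prime_ring TYPE('a) then qinv (Rep_F x) else Rep_F x)"
  unfolding inverse_F_def
  by (cases "prime_ring TYPE('a)") (simp_all add: Abs_F_P Rep_F_P qinv_center Abs_F_01 Rep_F_nP)

lemma F_eqI: "Rep_F (x::'a F) = Rep_F y \<Longrightarrow> x = y"
  by (simp add: Rep_F_inject)

instance
proof
  fix x y z :: "'a F"
  have nz: "(0::'a Q) \<noteq> 1" by simp
  show "x + y + z = x + (y + z)"
    by (rule F_eqI) (cases "prime_ring TYPE('a)"; insert Rep_F_nP[of x] Rep_F_nP[of y] Rep_F_nP[of z] nz; auto simp: Rep_F_plus algebra_simps)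
  show "x + y = y + x"
    by (rule F_eqI) (cases "prime_ring TYPE('a)"; insert Rep_F_nP[of x] Rep_F_nP[of y] nz; auto simp: Rep_F_plus algebra_simps)
  show "0 + x = x"
    by (rule F_eqI) (cases "prime_ring TYPE('a)"; insert Rep_F_nP[of x] nz; auto simp: Rep_F_plus Rep_F_0)
  show "- x + x = 0"
    by (rule F_eqI) (cases "prime_ring TYPE('a)"; insert Rep_F_nP[of x] nz; auto simp: Rep_F_plus Rep_F_0 Rep_F_uminus)
  show "x - y = x + - y" by (simp add: minus_F_def)
  show "x * y * z = x * (y * z)"
    by (rule F_eqI) (cases "prime_ring TYPE('a)"; insert Rep_F_nP[of x] Rep_F_nP[of y] Rep_F_nP[of z] nz; auto simp: Rep_F_times algebra_simps)
  show "x * y = y * x"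
    by (rule F_eqI) (cases "prime_ring TYPE('a)"; insert Rep_F_nP[of x] Rep_F_nP[of y] Rep_F_P[of x] nz; auto simp: Rep_F_times center_comm)
  show "1 * x = x"
    by (rule F_eqI) (cases "prime_ring TYPE('a)"; insert Rep_F_nP[of x] nz; auto simp: Rep_F_times Rep_F_1)
  show "(x + y) * z = x * z + y * z"
    by (rule F_eqI) (cases "prime_ring TYPE('a)"; insert Rep_F_nP[of x] Rep_F_nP[of y] Rep_F_nP[of z] nz; auto simp: Rep_F_times Rep_F_plus algebra_simps)
  show "(0::'a F) \<noteq> 1"
    using Rep_F_0 Rep_F_1 nz by metis
  show "x \<noteq> 0 \<Longrightarrow> inverse x * x = 1"
  proof -
    assume "x \<noteq> 0"
    then have x0: "Rep_F x \<noteq> 0" using Rep_F_0 F_eqI by metis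
    show ?thesis
      by (rule F_eqI) (cases "prime_ring TYPE('a)"; insert Rep_F_nP[of x] nz x0 qinv_P[OF _ Rep_F_P x0]; auto simp: Rep_F_times Rep_F_inverse Rep_F_1)
  qed
  show "divide x y = x * inverse y" by (simp add: divide_F_def)
  show "inverse (0::'a F) = 0"
    by (rule F_eqI) (auto simp: Rep_F_inverse Rep_F_0 qinv_0)
qed

end



definition lideal :: "'a::ring_1 set \<Rightarrow> bool" where
  "lideal L \<longleftrightarrow> 0 \<in> L \<and> (\<forall>x\<in>L. \<forall>y\<in>L. x + y \<in> L) \<and> (\<forall>r. \<forall>x\<in>L. r * x \<in> L)"

definition tideal :: "'a::ring_1 set \<Rightarrow> bool" where
  "tideal J \<longleftrightarrow> lideal J \<and> (\<forall>r. \<forall>x\<in>J. x * r \<in> J)"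


lemma fun_sum_apply: "(sum f A) x = (\<Sum>a\<in>A. f a x)"
  by (induction A rule: infinite_finite_induct) (simp_all add: plus_fun_def zero_fun_def)

context vector_space
begin

lemma fam_dep:
  assumes fI: "finite I" and fT: "finite T" and card: "card T < card I"
    and sp: "\<And>i. i \<in> I \<Longrightarrow> g i \<in> span T"
  shows "\<exists>l. (\<exists>i\<in>I. l i \<noteq> 0) \<and> (\<Sum>i\<in>I. scale (l i) (g i)) = 0"
proof (cases "inj_on g I")
  case False
  then obtain i j where ij: "i \<in> I" "j \<in> I" "i \<noteq> j" "g i = g j" by (auto simp: inj_on_def)
  define l where "l = (\<lambda>k. if k = i then (1::'a) else if k = j then -1 else 0)"
  have "(\<Sum>k\<in>I. scale (l k) (g k)) = (\<Sum>k\<in>{i,j}. scale (l k) (g k))"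
    by (rule sum.mono_neutral_right) (use ij fI in \<open>auto simp: l_def\<close>)
  also have "\<dots> = 0" using ij by (simp add: l_def)
  finally show ?thesis using ij by (auto simp: l_def intro!: exI[of _ l])
next
  case True
  have cI: "card (g ` I) = card I" using card_image[OF True] .
  have "dependent (g ` I)"
  proof (rule ccontr)
    assume "independent (g ` I)"
    then have "card (g ` I) \<le> card T" using independent_span_bound[OF fT] sp by blast
    then show False using cI card by simp
  qed
  then obtain t u where t: "finite t" "t \<subseteq> g ` I" "(\<Sum>v\<in>t. scale (u v) v) = 0" "\<exists>v\<in>t. u v \<noteq> 0"
    by (auto simp: dependent_explicit)
  define l where "l = (\<lambda>i. if g i \<in> t then u (g i) else 0)"
  have "(\<Sum>i\<in>I. scale (l i) (g i)) = (\<Sum>i\<in>I \<inter> g -` t. scale (u (g i)) (g i))"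
    by (rule sum.mono_neutral_cong_right) (use fI in \<open>auto simp: l_def\<close>)
  also have "\<dots> = (\<Sum>v\<in>g ` (I \<inter> g -` t). scale (u v) v)"
    by (rule sum.reindex[symmetric, unfolded comp_def]) (use True in \<open>auto simp: inj_on_def\<close>)
  also have "g ` (I \<inter> g -` t) = t" using t(2) by auto
  finally have "(\<Sum>i\<in>I. scale (l i) (g i)) = 0" using t(3) by simp
  moreover obtain v where "v \<in> t" "u v \<noteq> 0" using t(4) by blast
  moreover then obtain i where "i \<in> I" "g i = v" using t(2) by auto
  ultimately show ?thesis by (auto simp: l_def intro!: exI[of _ l])
qed

end

locale fdalg = finite_dimensional_vector_space scale Basis
  for scale :: "'f::field \<Rightarrow> 'v::ring_1 \<Rightarrow> 'v" (infixr \<open>*%\<close> 75) and Basis :: "'v set" +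
  assumes smult_left: "c *% (x * y) = (c *% x) * y"
      and smult_right: "c *% (x * y) = x * (c *% y)"
      and primeA: "(\<And>r. a * r * (b::'v) = 0) \<Longrightarrow> a = 0 \<or> b = 0"
      and center_scale: "z \<in> center \<Longrightarrow> \<exists>c. z = c *% 1"
begin

lemma scale_1: "c *% x = (c *% 1) * x"
  using smult_left[of c 1 x] by simp

lemma lideal_subspace: "lideal L \<Longrightarrow> subspace L"
  unfolding lideal_def subspace_def by (metis scale_1)

lemma brauer:
  fixes J :: "'v set"
  assumes J: "tideal J" and x0: "x0 \<in> J" "x0 \<noteq> 0" and e: "e * e = e" "e \<noteq> 1"
  shows "\<exists>g\<in>J. g * g = g \<and> g \<noteq> 0 \<and> g * e = 0"
proof -
  have Jl: "lideal J" and Jr: "\<And>r x. x \<in> J \<Longrightarrow> x * r \<in> J" using J by (auto simp: tideal_def)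
  define K where "K = {j * (1 - e) | j. j \<in> J}"
  have lK: "lideal K" unfolding lideal_def K_def
  proof (intro conjI ballI allI)
    show "0 \<in> {j * (1 - e) |j. j \<in> J}" using Jl by (auto simp: lideal_def intro!: exI[of _ 0])
    fix x y assume "x \<in> {j * (1 - e) |j. j \<in> J}" "y \<in> {j * (1 - e) |j. j \<in> J}"
    then obtain j1 j2 where "x = j1 * (1 - e)" "y = j2 * (1 - e)" "j1 \<in> J" "j2 \<in> J" by blast
    then show "x + y \<in> {j * (1 - e) |j. j \<in> J}" using Jl
      by (auto simp: lideal_def distrib_right intro!: exI[of _ "j1 + j2"])
  next
    fix r x assume "x \<in> {j * (1 - e) |j. j \<in> J}"
    then obtain j where "x = j * (1 - e)" "j \<in> J" by blast
    then show "r * x \<in> {j * (1 - e) |j. j \<in> J}" using Jl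
      by (auto simp: lideal_def mult.assoc intro!: exI[of _ "r * j"])
  qed
  have KJ: "k \<in> J \<and> k * e = 0" if kK: "k \<in> K" for k
  proof -
    obtain j where j: "k = j * (1 - e)" "j \<in> J" using kK unfolding K_def by blast
    have "k * e = j * ((1 - e) * e)" using j by (simp add: mult.assoc)
    also have "\<dots> = 0" using e by (simp add: algebra_simps)
    finally show ?thesis using j Jr by auto
  qed
  have "\<exists>r. x0 * r * (1 - e) \<noteq> 0" using primeA[of x0 "1 - e"] x0 e by auto
  then obtain r where r: "x0 * r * (1 - e) \<noteq> 0" by blast
  define LS where "LS = {L. lideal L \<and> L \<subseteq> K \<and> (\<exists>x\<in>L. x \<noteq> 0)}"
  have "K \<in> LS" unfolding LS_def using lK r Jr[OF x0(1)] K_def by blast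
  then obtain L where L: "L \<in> LS" and Lmin: "\<And>L'. L' \<in> LS \<Longrightarrow> dim L \<le> dim L'"
    using ex_has_least_nat[of "\<lambda>L. L \<in> LS" K dim] by blast
  have lL: "lideal L" and LK: "L \<subseteq> K" using L by (auto simp: LS_def)
  obtain y where y: "y \<in> L" "y \<noteq> 0" using L by (auto simp: LS_def)
  obtain q where q: "y * q * y \<noteq> 0" using primeA[of y y] y by auto
  define a where "a = q * y"
  have aL: "a \<in> L" using lL y unfolding a_def lideal_def by blast
  have ya: "y * a \<noteq> 0" using q by (simp add: a_def mult.assoc)
  define La where "La = {l * a | l. l \<in> L}"
  have lLa: "lideal La" unfolding lideal_def La_def
  proof (intro conjI ballI allI)
    show "0 \<in> {l * a |l. l \<in> L}" using lL by (auto simp: lideal_def intro!: exI[of _ 0])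
    fix x z assume "x \<in> {l * a |l. l \<in> L}" "z \<in> {l * a |l. l \<in> L}"
    then obtain j1 j2 where "x = j1 * a" "z = j2 * a" "j1 \<in> L" "j2 \<in> L" by blast
    then show "x + z \<in> {l * a |l. l \<in> L}" using lL
      by (auto simp: lideal_def distrib_right intro!: exI[of _ "j1 + j2"])
  next
    fix r x assume "x \<in> {l * a |l. l \<in> L}"
    then obtain j where "x = j * a" "j \<in> L" by blast
    then show "r * x \<in> {l * a |l. l \<in> L}" using lL
      by (auto simp: lideal_def mult.assoc intro!: exI[of _ "r * j"])
  qed
  have LaL: "La \<subseteq> L"
  proof
    fix x assume "x \<in> La"
    then obtain l where l: "x = l * a" "l \<in> L" by (auto simp: La_def)
    have "x = (l * q) * y" using l by (simp add: a_def mult.assoc)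
    then show "x \<in> L" using lL y unfolding lideal_def by blast
  qed
  have "La \<in> LS" unfolding LS_def using lLa LaL LK y ya by (auto simp: La_def)
  then have "dim L \<le> dim La" by (rule Lmin)
  then have "La = L" using subspace_dim_equal[OF lideal_subspace[OF lLa] lideal_subspace[OF lL] LaL] by simp
  then obtain e0 where e0: "e0 \<in> L" "a = e0 * a" using aL by (auto simp: La_def)
  define L' where "L' = {x \<in> L. x * a = 0}"
  have lL': "lideal L'" using lL unfolding lideal_def L'_def by (auto simp: distrib_right mult.assoc)
  have L'0: "x = 0" if "x \<in> L'" for x
  proof (rule ccontr)
    assume "x \<noteq> 0"
    then have "L' \<in> LS" using that lL' LK unfolding LS_def L'_def by auto
    then have "dim L \<le> dim L'" by (rule Lmin)
    then have "L' = L" using subspace_dim_equal[OF lideal_subspace[OF lL'] lideal_subspace[OF lL]]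
      by (auto simp: L'_def)
    then show False using y ya by (auto simp: L'_def)
  qed
  have "e0 * e0 - e0 \<in> L" using lL e0 lideal_subspace[OF lL] subspace_diff unfolding lideal_def by blast
  moreover have "(e0 * e0 - e0) * a = 0" using e0(2) by (simp add: algebra_simps mult.assoc[symmetric])
  ultimately have "e0 * e0 - e0 = 0" using L'0 L'_def by blast
  then have ee: "e0 * e0 = e0" by simp
  have "e0 \<noteq> 0" using e0 ya by auto
  moreover have "e0 \<in> J \<and> e0 * e = 0" using KJ LK e0 by blast
  ultimately show ?thesis using ee by blast
qed

lemma simple:
  fixes J :: "'v set"
  assumes J: "tideal J" and x0: "x0 \<in> J" "x0 \<noteq> 0"
  shows "1 \<in> J"
proof -
  have Jl: "lideal J" and Jr: "\<And>r x. x \<in> J \<Longrightarrow> x * r \<in> J" using J by (auto simp: tideal_def)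
  define D where "D = (\<lambda>e. dim {q * e | q. True})"
  have lQ: "lideal {q * e | q. True}" for e
    unfolding lideal_def by (auto simp: distrib_right mult.assoc intro: exI[of _ 0]) (metis distrib_right, metis mult.assoc)
  have "0 \<in> J \<and> (0::'v) * 0 = 0" using Jl by (simp add: lideal_def)
  moreover have "\<forall>(e::'v). e \<in> J \<and> e * e = e \<longrightarrow> D e < Suc dimension"
    using dim_subset_UNIV by (simp add: D_def le_imp_less_Suc)
  ultimately obtain e where e: "e \<in> J" "e * e = e" and emax: "\<And>e'. e' \<in> J \<and> e' * e' = e' \<Longrightarrow> D e' \<le> D e"
    using Lattices_Big.ex_has_greatest_nat[of "\<lambda>e. e \<in> J \<and> e * e = e" 0 D "Suc dimension"] by blast
  show "1 \<in> J"
  proof (rule ccontr)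
    assume "1 \<notin> J"
    then have "e \<noteq> 1" using e by auto
    then obtain g where g: "g \<in> J" "g * g = g" "g \<noteq> 0" "g * e = 0" using brauer[OF J x0 e(2)] by blast
    define h where "h = e + g - e * g"
    have hJ: "h \<in> J" unfolding h_def
      using e(1) g(1) Jl Jr lideal_subspace[OF Jl] subspace_diff unfolding lideal_def by metis
    have r1: "x * g * e = 0" for x using g(4) by (simp add: mult.assoc)
    have r2: "x * e * e = x * e" for x using e(2) by (simp add: mult.assoc)
    have r3: "x * g * g = x * g" for x using g(2) by (simp add: mult.assoc)
    have hh: "h * h = h" unfolding h_def
      by (simp add: ring_distribs mult.assoc[symmetric] r1 r2 r3 e(2) g(2) g(4))
    have eh: "e * h = e" unfolding h_def
      by (simp add: ring_distribs mult.assoc[symmetric] r1 r2 r3 e(2) g(2) g(4))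
    have he: "h * e = e" unfolding h_def
      by (simp add: ring_distribs mult.assoc[symmetric] r1 r2 r3 e(2) g(2) g(4))
    have sub: "{q * e | q. True} \<subseteq> {q * h | q. True}"
    proof
      fix x assume "x \<in> {q * e | q. True}"
      then obtain q where "x = q * e" by blast
      then have "x = (q * e) * h" using eh by (simp add: mult.assoc)
      then show "x \<in> {q * h | q. True}" by blast
    qed
    have "h \<notin> {q * e | q. True}"
    proof
      assume "h \<in> {q * e | q. True}"
      then obtain q where q: "h = q * e" by blast
      then have "h * e = h" using e(2) by (simp add: mult.assoc)
      then have "h = e" using he by simp
      then have "g = e * g" unfolding h_def by (simp add: algebra_simps)
      then have "g * g = g * e * g" by (metis mult.assoc)
      then show False using g by simp
    qed
    moreover have "h \<in> {q * h | q. True}" by (auto intro: exI[of _ 1])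
    ultimately have "{q * e | q. True} \<subset> {q * h | q. True}" using sub by blast
    then have "D e < D h" unfolding D_def
      using dim_psubset[of "{q * e | q. True}" "{q * h | q. True}"] lideal_subspace[OF lQ] span_eq_iff
      by metis
    moreover have "D h \<le> D e" using emax hJ hh by blast
    ultimately show False by simp
  qed
qed

lemma central_mult:
  fixes c d :: 'v
  assumes d: "d \<noteq> 0" and cd: "\<And>y. c * y * d = d * y * c"
  shows "\<exists>f. c = f *% d"
proof -
  define J where "J = {w. \<exists>u. \<forall>r. u * r * d = w * r * c}"
  have tJ: "tideal J" unfolding tideal_def lideal_def J_def
  proof (intro conjI ballI allI)
    show "0 \<in> {w. \<exists>u. \<forall>r. u * r * d = w * r * c}" by (auto intro: exI[of _ 0])
    fix x y assume "x \<in> {w. \<exists>u. \<forall>r. u * r * d = w * r * c}" "y \<in> {w. \<exists>u. \<forall>r. u * r * d = w * r * c}"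
    then obtain u1 u2 where "\<forall>r. u1 * r * d = x * r * c" "\<forall>r. u2 * r * d = y * r * c" by blast
    then show "x + y \<in> {w. \<exists>u. \<forall>r. u * r * d = w * r * c}"
      by (auto simp: distrib_right intro!: exI[of _ "u1 + u2"])
  next
    fix r x assume "x \<in> {w. \<exists>u. \<forall>r. u * r * d = w * r * c}"
    then obtain u where u: "\<forall>r. u * r * d = x * r * c" by blast
    then show "r * x \<in> {w. \<exists>u. \<forall>r. u * r * d = w * r * c}"
      by (auto simp: mult.assoc intro!: exI[of _ "r * u"])
  next
    fix r x assume "x \<in> {w. \<exists>u. \<forall>r. u * r * d = w * r * c}"
    then obtain u where u: "\<forall>r. u * r * d = x * r * c" by blast
    have "\<forall>s. (u * r) * s * d = (x * r) * s * c"
      using u by (metis mult.assoc)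
    then show "x * r \<in> {w. \<exists>u. \<forall>r. u * r * d = w * r * c}" by blast
  qed
  have "d \<in> J" unfolding J_def using cd by blast
  then have "1 \<in> J" using simple[OF tJ _ d] by blast
  then obtain z where z: "\<And>r. z * r * d = r * c" unfolding J_def by auto
  have zc: "z \<in> center" unfolding center_def
  proof (intro CollectI allI)
    fix x
    have P0: "(z * x - x * z) * r * d = 0" for r
      using z[of "x * r"] z[of r] by (simp add: algebra_simps mult.assoc)
    have "z * x - x * z = 0 \<or> d = 0" by (rule primeA[OF P0])
    then have "z * x - x * z = 0" using d by blast
    then show "z * x = x * z" by simp
  qed
  obtain f where f: "z = f *% 1" using center_scale[OF zc] by blast
  have "c = z * 1 * d" using z[of 1] by simp
  also have "\<dots> = f *% d" using f scale_1[of f d] by simp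
  finally show ?thesis by blast
qed


lemma martindale:
  fixes c :: "'v \<Rightarrow> 'v"
  assumes "finite B" "independent B" "\<And>y. (\<Sum>b\<in>B. b * y * c b) = 0"
  shows "\<forall>b\<in>B. c b = 0"
  using assms
proof (induction B arbitrary: c rule: finite_induct)
  case empty
  then show ?case by simp
next
  case (insert m B0 c)
  have ind0: "independent B0" using insert.prems(1) independent_mono by blast
  show ?case
  proof (cases "c m = 0")
    case True
    have "(\<Sum>b\<in>B0. b * y * c b) = 0" for y using insert.prems(2)[of y] insert.hyps True by simp
    then have "\<forall>b\<in>B0. c b = 0" using insert.IH[OF ind0] by blast
    with True show ?thesis by simp
  next
    case False
    define d where "d = c m"
    have dnz: "d \<noteq> 0" using False d_def by simp
    have key: "c b * y * d = d * y * c b" if bB: "b \<in> B0" for b y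
    proof -
      define c' where "c' = (\<lambda>b. c b * y * d - d * y * c b)"
      have "(\<Sum>b\<in>B0. b * x * c' b) = 0" for x
      proof -
        have s1: "(\<Sum>b\<in>insert m B0. b * x * (c b * y * d)) = 0"
        proof -
          have "(\<Sum>b\<in>insert m B0. b * x * (c b * y * d)) = (\<Sum>b\<in>insert m B0. b * x * c b) * (y * d)"
            by (simp add: sum_distrib_right mult.assoc)
          also have "\<dots> = 0" using insert.prems(2)[of x] by simp
          finally show ?thesis .
        qed
        have s2: "(\<Sum>b\<in>insert m B0. b * x * (d * y * c b)) = 0"
        proof -
          have "(\<Sum>b\<in>insert m B0. b * x * (d * y * c b)) = (\<Sum>b\<in>insert m B0. b * (x * d * y) * c b)"
            by (simp add: mult.assoc)
          also have "\<dots> = 0" using insert.prems(2)[of "x * d * y"] by simp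
          finally show ?thesis .
        qed
        have "(\<Sum>b\<in>insert m B0. b * x * c' b) = 0"
          using s1 s2 by (simp add: c'_def right_diff_distrib sum_subtractf del: sum.insert)
        moreover have "m * x * c' m = 0" by (simp add: c'_def d_def)
        ultimately show ?thesis using insert.hyps by simp
      qed
      then have "\<forall>b\<in>B0. c' b = 0" using insert.IH[OF ind0] by blast
      then show ?thesis using bB c'_def by simp
    qed
    have "\<forall>b\<in>B0. \<exists>f. c b = f *% d" using central_mult[OF dnz] key by blast
    then obtain f where f: "\<And>b. b \<in> B0 \<Longrightarrow> c b = f b *% d" by metis
    define g where "g = (\<lambda>b. if b = m then 1 else f b)"
    have cg: "c b = g b *% d" if "b \<in> insert m B0" for b
      using that f insert.hyps(2) by (auto simp: g_def d_def)
    have "(\<Sum>b\<in>insert m B0. g b *% b) * y * d = 0" for y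
    proof -
      have "(\<Sum>b\<in>insert m B0. g b *% b) * y * d = (\<Sum>b\<in>insert m B0. (g b *% b) * y * d)"
        by (simp add: sum_distrib_right)
      also have "\<dots> = (\<Sum>b\<in>insert m B0. b * y * c b)"
      proof (rule sum.cong[OF refl])
        fix b assume "b \<in> insert m B0"
        then have "b * y * c b = b * y * (g b *% d)" using cg by simp
        also have "\<dots> = g b *% (b * y * d)" by (simp add: smult_right)
        also have "\<dots> = (g b *% b) * y * d" by (simp add: smult_left mult.assoc)
        finally show "(g b *% b) * y * d = b * y * c b" by simp
      qed
      also have "\<dots> = 0" using insert.prems(2) by simp
      finally show ?thesis .
    qed
    then have "(\<Sum>b\<in>insert m B0. g b *% b) = 0 \<or> d = 0" by (rule primeA)
    then have "(\<Sum>b\<in>insert m B0. g b *% b) = 0" using dnz by simp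
    then have "g m = 0" using independentD[OF insert.prems(1), of "insert m B0" g m] insert.hyps by simp
    then show ?thesis by (simp add: g_def)
  qed
qed


theorem skolem_noether:
  fixes \<Phi> :: "'v \<Rightarrow> 'v"
  assumes \<Phi>add: "\<And>x y. \<Phi> (x + y) = \<Phi> x + \<Phi> y" and \<Phi>scale: "\<And>c x. \<Phi> (c *% x) = c *% \<Phi> x"
      and \<Phi>mult: "\<And>x y. \<Phi> (x * y) = \<Phi> x * \<Phi> y" and \<Phi>1: "\<Phi> 1 = 1"
  shows "\<exists>c. c \<noteq> 0 \<and> (\<forall>y. y * c = c * \<Phi> y)"
proof -
  define I where "I = insert None (Some ` (Basis \<times> Basis))"
  define T where "T = (\<lambda>i. case i of None \<Rightarrow> \<Phi> | Some pq \<Rightarrow> (\<lambda>y. fst pq * y * snd pq))"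
  have Tadd: "T i (x + y) = T i x + T i y" for i x y
    by (cases i) (auto simp: T_def \<Phi>add algebra_simps)
  have Tscale: "T i (c *% x) = c *% T i x" for i c x
    by (cases i) (auto simp: T_def \<Phi>scale smult_left[symmetric] smult_right[symmetric] mult.assoc)
  have T0: "T i 0 = 0" for i using Tadd[of i 0 0] by simp
  interpret FS: vector_space "\<lambda>c (f::'v \<Rightarrow> 'v) y. c *% f y"
    by unfold_locales (auto simp: fun_eq_iff plus_fun_def scale_right_distrib scale_left_distrib)
  define ev where "ev f = (\<lambda>y. if y \<in> Basis then f y else (0::'v))" for f :: "'v \<Rightarrow> 'v"
  define \<delta> where "\<delta> b w = (\<lambda>y. if y = b then w else (0::'v))" for b w :: 'v
  define E where "E = (\<lambda>bu. \<delta> (fst bu) (snd bu)) ` (Basis \<times> Basis)"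
  have fE: "finite E" using finite_Basis by (simp add: E_def)
  have cE: "card E \<le> card Basis * card Basis"
    unfolding E_def using card_image_le[of "Basis \<times> Basis"] finite_Basis
    by (simp add: card_cartesian_product)
  have fI: "finite I" using finite_Basis by (simp add: I_def)
  have cI: "card I = Suc (card Basis * card Basis)"
    unfolding I_def using finite_Basis by (simp add: card_image card_cartesian_product)
  have \<delta>sp: "\<delta> b w \<in> FS.span E" if bB: "b \<in> Basis" for b w
  proof -
    have "w \<in> span Basis" using span_Basis by simp
    then obtain u where w: "w = (\<Sum>v\<in>Basis. u v *% v)" using span_finite[OF finite_Basis] by auto
    have "\<delta> b w = (\<Sum>v\<in>Basis. (\<lambda>y. u v *% \<delta> b v y))"
      by (auto simp: fun_eq_iff fun_sum_apply \<delta>_def w)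
    also have "\<dots> \<in> FS.span E"
    proof (rule FS.span_sum)
      fix v assume "v \<in> Basis"
      then have "\<delta> b v \<in> E" using bB by (force simp: E_def)
      then show "(\<lambda>y. u v *% \<delta> b v y) \<in> FS.span E" by (intro FS.span_scale FS.span_base)
    qed
    finally show ?thesis .
  qed
  have evsp: "ev f \<in> FS.span E" for f
  proof -
    have "ev f = (\<Sum>b\<in>Basis. \<delta> b (f b))"
      using finite_Basis by (auto simp: fun_eq_iff fun_sum_apply ev_def \<delta>_def)
    also have "\<dots> \<in> FS.span E" by (intro FS.span_sum \<delta>sp)
    finally show ?thesis .
  qed
  obtain l where l: "\<exists>i\<in>I. l i \<noteq> 0" "(\<Sum>i\<in>I. (\<lambda>y. l i *% ev (T i) y)) = 0"
    using FS.fam_dep[of I E "\<lambda>i. ev (T i)"] fE fI cI cE evsp by auto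
  define R where "R y = (\<Sum>i\<in>I. l i *% T i y)" for y
  have Rb: "R b = 0" if "b \<in> Basis" for b
  proof -
    have "(\<Sum>i\<in>I. (\<lambda>y. l i *% ev (T i) y)) b = 0" using l(2) by simp
    then show ?thesis using that by (simp add: fun_sum_apply R_def ev_def)
  qed
  have R0: "R y = 0" for y
  proof -
    have "subspace {y. R y = 0}"
    proof (rule subspaceI)
      show "0 \<in> {y. R y = 0}" by (simp add: R_def T0)
      fix x y assume "x \<in> {y. R y = 0}" "y \<in> {y. R y = 0}"
      then show "x + y \<in> {y. R y = 0}"
        by (simp add: R_def Tadd scale_right_distrib sum.distrib)
    next
      fix c x assume "x \<in> {y. R y = 0}"
      then have "c *% R x = 0" by simp
      then show "c *% x \<in> {y. R y = 0}"
        by (simp add: R_def Tscale scale_sum_right mult.commute)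
    qed
    then have "span Basis \<subseteq> {y. R y = 0}" using Rb by (intro span_minimal) auto
    then show ?thesis using span_Basis by auto
  qed
  define \<mu> where "\<mu> = l None"
  define c0 where "c0 p = (\<Sum>q\<in>Basis. l (Some (p, q)) *% q)" for p
  have Rsplit: "R y = \<mu> *% \<Phi> y + (\<Sum>p\<in>Basis. p * y * c0 p)" for y
  proof -
    have "R y = l None *% T None y + (\<Sum>i\<in>Some ` (Basis \<times> Basis). l i *% T i y)"
      unfolding R_def I_def using finite_Basis by (subst sum.insert) auto
    also have "(\<Sum>i\<in>Some ` (Basis \<times> Basis). l i *% T i y) = (\<Sum>pq\<in>Basis \<times> Basis. l (Some pq) *% (fst pq * y * snd pq))"
      by (subst sum.reindex) (auto simp: T_def)
    also have "\<dots> = (\<Sum>p\<in>Basis. \<Sum>q\<in>Basis. l (Some (p, q)) *% (p * y * q))"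
      by (simp add: sum.cartesian_product split_beta)
    also have "\<dots> = (\<Sum>p\<in>Basis. p * y * c0 p)"
      by (simp add: c0_def sum_distrib_left smult_right)
    finally show ?thesis by (simp add: T_def \<mu>_def)
  qed
  have \<mu>nz: "\<mu> \<noteq> 0"
  proof
    assume \<mu>0: "\<mu> = 0"
    have "\<forall>p\<in>Basis. c0 p = 0"
      using martindale[OF finite_Basis independent_Basis, where c = c0] R0 Rsplit \<mu>0 by simp
    then have "l (Some (p, q)) = 0" if "p \<in> Basis" "q \<in> Basis" for p q
      using independentD[OF independent_Basis finite_Basis subset_refl, of "\<lambda>q. l (Some (p, q))" q] that
      by (simp add: c0_def)
    then have "\<forall>i\<in>I. l i = 0" using \<mu>0 by (auto simp: I_def \<mu>_def)
    then show False using l(1) by blast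
  qed
  define c1 where "c1 p = (- inverse \<mu>) *% c0 p" for p
  have \<Phi>rep: "\<Phi> y = (\<Sum>p\<in>Basis. p * y * c1 p)" for y
  proof -
    have "\<mu> *% \<Phi> y = - (\<Sum>p\<in>Basis. p * y * c0 p)" using R0[of y] Rsplit[of y]
      by (simp add: add_eq_0_iff)
    then have "\<Phi> y = inverse \<mu> *% (- (\<Sum>p\<in>Basis. p * y * c0 p))"
    proof -
      have "\<Phi> y = (inverse \<mu> * \<mu>) *% \<Phi> y" using \<mu>nz by simp
      also have "\<dots> = inverse \<mu> *% (\<mu> *% \<Phi> y)" by simp
      finally show ?thesis using \<open>\<mu> *% \<Phi> y = _\<close> by simp
    qed
    also have "\<dots> = (\<Sum>p\<in>Basis. p * y * c1 p)"
      by (simp add: c1_def scale_sum_right smult_right sum_negf)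
    finally show ?thesis .
  qed
  have comm: "\<forall>p\<in>Basis. y * c1 p - c1 p * \<Phi> y = 0" for y
  proof (rule martindale[OF finite_Basis independent_Basis])
    fix x
    have "(\<Sum>p\<in>Basis. p * x * (y * c1 p - c1 p * \<Phi> y))
          = (\<Sum>p\<in>Basis. p * (x * y) * c1 p) - (\<Sum>p\<in>Basis. p * x * c1 p) * \<Phi> y"
      by (simp add: right_diff_distrib sum_subtractf sum_distrib_right mult.assoc)
    also have "\<dots> = \<Phi> (x * y) - \<Phi> x * \<Phi> y" using \<Phi>rep by simp
    also have "\<dots> = 0" using \<Phi>mult by simp
    finally show "(\<Sum>p\<in>Basis. p * x * (y * c1 p - c1 p * \<Phi> y)) = 0" .
  qed
  have "\<exists>p\<in>Basis. c1 p \<noteq> 0"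
  proof (rule ccontr)
    assume "\<not> (\<exists>p\<in>Basis. c1 p \<noteq> 0)"
    then have "\<Phi> 1 = 0" using \<Phi>rep[of 1] by simp
    then show False using \<Phi>1 by simp
  qed
  then obtain p where "p \<in> Basis" "c1 p \<noteq> 0" by blast
  then show ?thesis using comm by (intro exI[of _ "c1 p"]) auto
qed

end



definition sc :: "'a::ring_1 F \<Rightarrow> 'a Q \<Rightarrow> 'a Q" where
  "sc c q = Rep_F c * q"

definition Qphi :: "('a::ring_1 \<Rightarrow> 'a) \<Rightarrow> 'a Q \<Rightarrow> 'a Q" where
  "Qphi \<phi> q = (SOME q'. \<exists>a s. s \<in> Sreg \<and> q = frac a s \<and> q' = frac (\<phi> a) s)"

lemma Oz_props:
  assumes "\<phi> \<in> Oz \<iota>"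
  shows "bij \<phi>" "\<And>x y. \<phi> (x + y) = \<phi> x + \<phi> y" "\<And>x y. \<phi> (x * y) = \<phi> x * \<phi> y"
    "\<phi> 1 = 1" "\<And>z. z \<in> center \<Longrightarrow> \<phi> z = z"
  using assms by (auto simp: Oz_def)

lemma Qphi_frac:
  assumes phi: "\<phi> \<in> Oz \<iota>" and s: "s \<in> Sreg"
  shows "Qphi \<phi> (frac a s) = frac (\<phi> a) s"
proof -
  have wd: "frac (\<phi> b) t = frac (\<phi> a) s" if t: "t \<in> Sreg" and eq: "frac a s = frac b t" for b t
  proof -
    have "a * t = b * s" using eq s t by (simp add: frac_eq)
    then have "\<phi> (a * t) = \<phi> (b * s)" by simp
    then have "\<phi> a * t = \<phi> b * s"
      using Oz_props[OF phi] Sreg_center[OF s] Sreg_center[OF t] by simp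
    then show ?thesis using s t by (simp add: frac_eq)
  qed
  have "\<exists>q'. \<exists>b t. t \<in> Sreg \<and> frac a s = frac b t \<and> q' = frac (\<phi> b) t" using s by blast
  from someI_ex[OF this] obtain b t where "t \<in> Sreg" "frac a s = frac b t" "Qphi \<phi> (frac a s) = frac (\<phi> b) t"
    unfolding Qphi_def by blast
  then show ?thesis using wd by simp
qed

context
  fixes \<iota> :: "'k::field \<Rightarrow> 'a::ring_1" and \<phi> :: "'a \<Rightarrow> 'a"
  assumes P: "prime_ring TYPE('a)" and fin: "finite_over_center TYPE('a)" and phi: "\<phi> \<in> Oz \<iota>"
begin

lemma Rep_F_add_P: "Rep_F (a + b) = Rep_F a + Rep_F (b :: 'a F)"
  using P by (simp add: Rep_F_plus)
lemma Rep_F_mult_P: "Rep_F (a * b) = Rep_F a * Rep_F (b :: 'a F)"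
  using P by (simp add: Rep_F_times)

lemma vs: "vector_space (sc :: 'a F \<Rightarrow> 'a Q \<Rightarrow> 'a Q)"
  by unfold_locales (simp_all add: sc_def Rep_F_add_P Rep_F_mult_P Rep_F_1 algebra_simps)

lemma span_all: "\<exists>S::'a set. finite S \<and> module.span sc (emb ` S) = UNIV"
proof -
  interpret V: vector_space "sc :: 'a F \<Rightarrow> 'a Q \<Rightarrow> 'a Q" by (rule vs)
  obtain S :: "'a set" where S: "finite S" "\<And>x. \<exists>c. (\<forall>s\<in>S. c s \<in> center) \<and> x = (\<Sum>s\<in>S. c s * s)"
    using fin unfolding finite_over_center_def by blast
  have "q \<in> V.span (emb ` S)" for q
  proof -
    obtain a s where q: "q = frac a s" "s \<in> Sreg" by (cases q)
    obtain c where c: "\<forall>x\<in>S. c x \<in> center" "a = (\<Sum>x\<in>S. c x * x)" using S(2) by blast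
    have fc: "frac 1 s \<in> center" using frac1_center[OF q(2)] .
    have "q = frac 1 s * emb a" using q frac_as[OF q(2), of a] center_comm[OF fc] by simp
    also have "\<dots> = (\<Sum>x\<in>S. (frac 1 s * emb (c x)) * emb x)"
      by (simp add: c(2) emb_sum emb_mult sum_distrib_left mult.assoc)
    also have "\<dots> = (\<Sum>x\<in>S. sc (Abs_F (frac 1 s * emb (c x))) (emb x))"
    proof (rule sum.cong[OF refl])
      fix x assume "x \<in> S"
      then have "frac 1 s * emb (c x) \<in> center" using fc emb_center c(1) center_mult by blast
      then show "frac 1 s * emb (c x) * emb x = sc (Abs_F (frac 1 s * emb (c x))) (emb x)"
        by (simp add: sc_def Abs_F_P[OF P])
    qed
    also have "\<dots> \<in> V.span (emb ` S)"
      by (intro V.span_sum V.span_scale V.span_base) auto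
    finally show ?thesis .
  qed
  then show ?thesis using S(1) by blast
qed

lemma exists_fdalg: "\<exists>B. fdalg (sc :: 'a F \<Rightarrow> 'a Q \<Rightarrow> 'a Q) B"
proof -
  interpret V: vector_space "sc :: 'a F \<Rightarrow> 'a Q \<Rightarrow> 'a Q" by (rule vs)
  obtain S :: "'a set" where S: "finite S" "V.span (emb ` S) = UNIV" using span_all by blast
  obtain B where B: "B \<subseteq> emb ` S" "V.independent B" "emb ` S \<subseteq> V.span B"
    using V.maximal_independent_subset[of "emb ` S"] by blast
  have fB: "finite B" using B(1) S(1) finite_subset by blast
  have "V.span B = UNIV"
    using V.span_mono[OF B(3)] S(2) by (auto simp: V.span_span)
  show ?thesis
  proof (rule exI, unfold_locales)
    show "finite B" by (rule fB)
    show "V.independent B" by (rule B(2))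
    show "V.span B = UNIV" by fact
    fix c :: "'a F" and x y :: "'a Q"
    show "sc c (x * y) = sc c x * y" by (simp add: sc_def mult.assoc)
    show "sc c (x * y) = x * sc c y"
      using center_comm[OF Rep_F_P[OF P, of c], of x] by (simp add: sc_def mult.assoc[symmetric])
  next
    fix a b :: "'a Q"
    assume "\<And>r. a * r * b = 0"
    then show "a = 0 \<or> b = 0" using prime_Q[OF P] by blast
  next
    fix z :: "'a Q" assume "z \<in> center"
    then show "\<exists>c. z = sc c 1" by (intro exI[of _ "Abs_F z"]) (simp add: sc_def Abs_F_P[OF P])
  qed
qed

lemma part1_core: "\<exists>a. a \<noteq> 0 \<and> (\<forall>x. a * \<phi> x = x * a)"
proof -
  obtain B where "fdalg (sc :: 'a F \<Rightarrow> 'a Q \<Rightarrow> 'a Q) B" using exists_fdalg by blast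
  then interpret fdalg "sc :: 'a F \<Rightarrow> 'a Q \<Rightarrow> 'a Q" B .
  note op = Oz_props[OF phi]
  have Qadd: "Qphi \<phi> (x + y) = Qphi \<phi> x + Qphi \<phi> y" for x y
  proof -
    obtain a s where x: "x = frac a s" "s \<in> Sreg" by (cases x)
    obtain b t where y: "y = frac b t" "t \<in> Sreg" by (cases y)
    show ?thesis using x y op Sreg_center[OF x(2)] Sreg_center[OF y(2)]
      by (simp add: frac_add Sreg_mult Qphi_frac[OF phi])
  qed
  have Qmult: "Qphi \<phi> (x * y) = Qphi \<phi> x * Qphi \<phi> y" for x y
  proof -
    obtain a s where x: "x = frac a s" "s \<in> Sreg" by (cases x)
    obtain b t where y: "y = frac b t" "t \<in> Sreg" by (cases y)
    show ?thesis using x y op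
      by (simp add: frac_mult Sreg_mult Qphi_frac[OF phi])
  qed
  have Q1: "Qphi \<phi> 1 = 1" using op by (simp add: one_frac Qphi_frac[OF phi] Sreg_one)
  have Qscale: "Qphi \<phi> (sc c x) = sc c (Qphi \<phi> x)" for c x
  proof -
    obtain z t where zt: "z \<in> center" "t \<in> Sreg" "Rep_F c = frac z t"
      using center_frac[OF Rep_F_P[OF P, of c]] by blast
    obtain a s where x: "x = frac a s" "s \<in> Sreg" by (cases x)
    show ?thesis using x zt op
      by (simp add: sc_def frac_mult Sreg_mult Qphi_frac[OF phi])
  qed
  obtain c where c: "c \<noteq> 0" "\<And>y. y * c = c * Qphi \<phi> y"
    using skolem_noether[of "Qphi \<phi>"] Qadd Qmult Q1 Qscale by blast
  obtain a s where cs: "c = frac a s" "s \<in> Sreg" by (cases c)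
  have a0: "a \<noteq> 0" using c(1) cs by (simp add: frac_zero_iff)
  have "x * a = a * \<phi> x" for x
  proof -
    have "emb x * c = c * emb (\<phi> x)" using c(2)[of "emb x"] cs(2) by (simp add: emb_def Qphi_frac[OF phi] Sreg_one)
    then have "emb x * c * emb s = c * emb (\<phi> x) * emb s" by simp
    also have "\<dots> = c * emb s * emb (\<phi> x)"
      using center_comm[OF emb_center[OF Sreg_center[OF cs(2)]], of "emb (\<phi> x)"] by (simp add: mult.assoc)
    moreover have "c * emb s = emb a" using cs frac_emb by simp
    ultimately have "emb x * emb a = emb a * emb (\<phi> x)" by (simp add: mult.assoc)
    then show ?thesis by (simp add: emb_mult[symmetric] emb_inj)
  qed
  then show ?thesis using a0 by metis
qed

end

lemma reg_normal:
  assumes P: "prime_ring TYPE('a::ring_1)" and phi: "\<phi> \<in> Oz \<iota>"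
    and a: "(a::'a) \<noteq> 0" "\<And>x. a * \<phi> x = x * a"
  shows "regular_elem a \<and> normal_elem a"
proof -
  note op = Oz_props[OF phi]
  have surj: "\<And>x. \<exists>y. x = \<phi> y" using op(1) by (metis bij_def surj_def)
  have r1: "x = 0" if "a * x = 0" for x
  proof -
    obtain y where y: "x = \<phi> y" using surj by blast
    have "a * r * x = 0" for r
    proof -
      obtain w where w: "r = \<phi> w" using surj by blast
      have "a * r * x = w * (a * x)" using a(2)[of w] w by (simp add: mult.assoc)
      then show ?thesis using that by simp
    qed
    then show ?thesis using prime_ringD[OF P] a(1) by blast
  qed
  have r2: "x = 0" if "x * a = 0" for x
  proof -
    have "x * r * a = 0" for r
    proof -
      have "x * r * a = (x * a) * \<phi> r" using a(2)[of r] by (simp add: mult.assoc)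
      then show ?thesis using that by simp
    qed
    then show ?thesis using prime_ringD[OF P] a(1) by blast
  qed
  have n: "{a * x | x. True} = {x * a | x. True}"
  proof (intro equalityI subsetI)
    fix z assume "z \<in> {a * x | x. True}"
    then obtain x where x: "z = a * x" by blast
    obtain y where "x = \<phi> y" using surj by blast
    then show "z \<in> {x * a | x. True}" using x a(2) by auto
  next
    fix z assume "z \<in> {x * a | x. True}"
    then obtain x where x: "z = x * a" by blast
    then show "z \<in> {a * x | x. True}" using a(2)[of x] by (auto intro: exI[of _ "\<phi> x"])
  qed
  show ?thesis unfolding regular_elem_def normal_elem_def using r1 r2 n by blast
qed



definition dec :: "('g::ab_group_add \<Rightarrow> 'a::ring_1 set) \<Rightarrow> 'a \<Rightarrow> 'g \<Rightarrow> 'a" where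
  "dec Ag x = (THE c. finite {g. c g \<noteq> 0} \<and> (\<forall>g. c g \<in> Ag g) \<and> x = (\<Sum>g\<in>{g. c g \<noteq> 0}. c g))"

lemma sum_nz_ex: "sum f {x \<in> A. P x} \<noteq> (0::'b::comm_monoid_add) \<Longrightarrow> \<exists>x\<in>A. P x"
proof (rule ccontr)
  assume a: "sum f {x \<in> A. P x} \<noteq> 0" "\<not> (\<exists>x\<in>A. P x)"
  then have "{x \<in> A. P x} = {}" by auto
  then have "sum f {x \<in> A. P x} = sum f {}" by (rule arg_cong)
  then show False using a by simp
qed

context
  fixes \<iota> :: "'k::field \<Rightarrow> 'a::ring_1" and Ag :: "'g::ab_group_add \<Rightarrow> 'a set"
  assumes gr: "graded_algebra \<iota> Ag"
begin

lemma Ag0: "0 \<in> Ag g" using gr by (simp add: graded_algebra_def)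
lemma Agadd: "x \<in> Ag g \<Longrightarrow> y \<in> Ag g \<Longrightarrow> x + y \<in> Ag g" using gr by (simp add: graded_algebra_def)
lemma Agmult: "x \<in> Ag g \<Longrightarrow> y \<in> Ag h \<Longrightarrow> x * y \<in> Ag (g + h)" using gr by (simp add: graded_algebra_def)
lemma Agsum: "finite I \<Longrightarrow> (\<And>i. i \<in> I \<Longrightarrow> u i \<in> Ag g) \<Longrightarrow> sum u I \<in> Ag g"
  by (induction I rule: finite_induct) (auto simp: Ag0 Agadd)

lemma dec_ex1: "\<exists>!c. finite {g. c g \<noteq> 0} \<and> (\<forall>g. c g \<in> Ag g) \<and> x = (\<Sum>g\<in>{g. c g \<noteq> 0}. c g)"
  using gr by (simp add: graded_algebra_def)

lemma dec_props: "finite {g. dec Ag x g \<noteq> 0}" "dec Ag x g \<in> Ag g" "x = (\<Sum>g\<in>{g. dec Ag x g \<noteq> 0}. dec Ag x g)"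
  using theI'[OF dec_ex1[of x]] unfolding dec_def by blast+

lemma dec_unique:
  assumes "finite {g. c g \<noteq> 0}" "\<And>g. c g \<in> Ag g" "x = (\<Sum>g\<in>{g. c g \<noteq> 0}. c g)"
  shows "dec Ag x = c"
  unfolding dec_def using assms by (intro the1_equality[OF dec_ex1]) auto

lemma dec_sum:
  assumes fI: "finite I" and u: "\<And>i. i \<in> I \<Longrightarrow> u i \<in> Ag (d i)"
  shows "dec Ag (sum u I) g = (\<Sum>i\<in>{i\<in>I. d i = g}. u i)"
proof -
  define c where "c g = (\<Sum>i\<in>{i\<in>I. d i = g}. u i)" for g
  have sub: "{g. c g \<noteq> 0} \<subseteq> d ` I"
  proof
    fix g assume "g \<in> {g. c g \<noteq> 0}"
    then have cg: "c g \<noteq> 0" by simp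
    show "g \<in> d ` I" using sum_nz_ex[of u I "\<lambda>i. d i = g"] cg unfolding c_def by auto
  qed
  have fin: "finite {g. c g \<noteq> 0}" using finite_subset[OF sub] fI by blast
  have cA: "c g \<in> Ag g" for g unfolding c_def using fI u by (intro Agsum) auto
  have "(\<Sum>g\<in>{g. c g \<noteq> 0}. c g) = (\<Sum>g\<in>d ` I. c g)"
    by (rule sum.mono_neutral_left) (use fI sub in auto)
  also have "\<dots> = sum u I" unfolding c_def by (rule sum.image_gen[symmetric]) (rule fI)
  finally have "dec Ag (sum u I) = c" using fin cA by (intro dec_unique) auto
  then show ?thesis by (simp add: c_def)
qed

lemma dec_homog:
  assumes "x \<in> Ag h"
  shows "dec Ag x g = (if g = h then x else 0)"
proof -
  have "dec Ag (\<Sum>i\<in>{()}. x) g = (\<Sum>i\<in>{i\<in>{()}. h = g}. x)" by (rule dec_sum) (use assms in auto)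
  then show ?thesis by (cases "g = h") auto
qed

lemma dec_zero_imp_homog:
  assumes "\<And>g. g \<noteq> h \<Longrightarrow> dec Ag x g = 0"
  shows "x \<in> Ag h"
proof -
  have sub: "{g. dec Ag x g \<noteq> 0} \<subseteq> {h}" using assms by auto
  have "x = (\<Sum>g\<in>{g. dec Ag x g \<noteq> 0}. dec Ag x g)" by (rule dec_props(3))
  also have "\<dots> = (\<Sum>g\<in>{h}. dec Ag x g)"
    by (rule sum.mono_neutral_left) (use sub in auto)
  also have "\<dots> = dec Ag x h" by simp
  finally have "x = dec Ag x h" .
  then show ?thesis using dec_props(2)[of x h] by metis
qed

lemma dec_expand: "finite G \<Longrightarrow> {g. dec Ag x g \<noteq> 0} \<subseteq> G \<Longrightarrow> x = (\<Sum>g\<in>G. dec Ag x g)"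
proof -
  assume a: "finite G" "{g. dec Ag x g \<noteq> 0} \<subseteq> G"
  have "(\<Sum>g\<in>{g. dec Ag x g \<noteq> 0}. dec Ag x g) = (\<Sum>g\<in>G. dec Ag x g)"
    by (rule sum.mono_neutral_left) (use a in auto)
  then show ?thesis using dec_props(3)[of x] by simp
qed

lemma dec_nonzero: "x \<noteq> 0 \<Longrightarrow> \<exists>g. dec Ag x g \<noteq> 0"
proof -
  assume "x \<noteq> 0"
  then have "{g. dec Ag x g \<noteq> 0} \<noteq> {}" using dec_props(3)[of x] by (metis sum.empty)
  then show ?thesis by blast
qed

lemma key_bound:
  fixes w :: "'g \<Rightarrow> 'o::linordered_ab_group_add"
  assumes dom: "is_domain TYPE('a)"
    and wadd: "\<And>g h. w (g + h) = w g + w h" and winj: "inj w"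
    and x: "x \<in> Ag h" "x \<noteq> 0" and a: "a \<noteq> 0" and y: "y \<noteq> 0" and eq: "x * a = a * y"
    and g': "dec Ag y g' \<noteq> 0"
  shows "w g' \<le> w h"
proof -
  have nzd: "\<And>u v::'a. u \<noteq> 0 \<Longrightarrow> v \<noteq> 0 \<Longrightarrow> u * v \<noteq> 0" using dom by (auto simp: is_domain_def)
  define Ga where "Ga = {g. dec Ag a g \<noteq> 0}"
  define Gy where "Gy = {g. dec Ag y g \<noteq> 0}"
  have fGa: "finite Ga" and fGy: "finite Gy" using dec_props(1) by (auto simp: Ga_def Gy_def)
  have neGa: "Ga \<noteq> {}" using dec_nonzero[OF a] by (auto simp: Ga_def)
  have neGy: "Gy \<noteq> {}" using g' by (auto simp: Gy_def)
  obtain m where m: "m \<in> Ga" "\<And>g. g \<in> Ga \<Longrightarrow> w g \<le> w m"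
  proof -
    have "Max (w ` Ga) \<in> w ` Ga" using fGa neGa by simp
    then obtain m where "m \<in> Ga" "w m = Max (w ` Ga)" by auto
    then show ?thesis using that fGa by auto
  qed
  obtain m' where m': "m' \<in> Gy" "\<And>g. g \<in> Gy \<Longrightarrow> w g \<le> w m'"
  proof -
    have "Max (w ` Gy) \<in> w ` Gy" using fGy neGy by simp
    then obtain m where "m \<in> Gy" "w m = Max (w ` Gy)" by auto
    then show ?thesis using that fGy by auto
  qed
  have ea: "a = (\<Sum>g\<in>Ga. dec Ag a g)" using dec_props(3) by (simp add: Ga_def)
  have ey: "y = (\<Sum>g\<in>Gy. dec Ag y g)" using dec_props(3) by (simp add: Gy_def)
  have xa: "x * a = (\<Sum>g\<in>Ga. x * dec Ag a g)" by (subst ea) (simp add: sum_distrib_left)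
  have ay: "a * y = (\<Sum>p\<in>Ga \<times> Gy. dec Ag a (fst p) * dec Ag y (snd p))"
    by (subst ea, subst ey) (simp add: sum_product sum.cartesian_product split_beta)
  have d_ay: "dec Ag (a * y) (m + m') = dec Ag a m * dec Ag y m'"
  proof -
    have "dec Ag (a * y) (m + m') = (\<Sum>p\<in>{p \<in> Ga \<times> Gy. fst p + snd p = m + m'}. dec Ag a (fst p) * dec Ag y (snd p))"
      unfolding ay using fGa fGy by (intro dec_sum) (auto intro: Agmult dec_props(2))
    also have "{p \<in> Ga \<times> Gy. fst p + snd p = m + m'} = {(m, m')}"
    proof (intro equalityI subsetI)
      fix p assume p: "p \<in> {p \<in> Ga \<times> Gy. fst p + snd p = m + m'}"
      obtain g1 g2 where pp: "p = (g1, g2)" by (cases p)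
      have g12: "g1 \<in> Ga" "g2 \<in> Gy" "g1 + g2 = m + m'" using p pp by auto
      have "w g1 + w g2 = w m + w m'" using g12(3) wadd by metis
      moreover have "w g1 \<le> w m" "w g2 \<le> w m'" using m m' g12 by auto
      ultimately have "w g1 = w m" by (metis add_mono antisym_conv1 add_less_le_mono less_irrefl)
      then have "g1 = m" using winj by (simp add: inj_eq)
      then have "g2 = m'" using g12(3) by simp
      then show "p \<in> {(m, m')}" using pp \<open>g1 = m\<close> by simp
    qed (use m m' in auto)
    finally show ?thesis by simp
  qed
  have "dec Ag a m * dec Ag y m' \<noteq> 0" using m(1) m'(1) nzd by (auto simp: Ga_def Gy_def)
  then have N: "dec Ag (x * a) (m + m') \<noteq> 0" using d_ay eq by simp
  have E: "dec Ag (x * a) (m + m') = (\<Sum>g\<in>{g\<in>Ga. h + g = m + m'}. x * dec Ag a g)"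
    unfolding xa using fGa by (intro dec_sum) (auto intro: Agmult dec_props(2) x(1))
  have "(\<Sum>g\<in>{g\<in>Ga. h + g = m + m'}. x * dec Ag a g) \<noteq> 0" using N unfolding E .
  then have "\<exists>g\<in>Ga. h + g = m + m'" by (rule sum_nz_ex)
  then obtain g where g: "g \<in> Ga" "h + g = m + m'" by blast
  have "w h + w g = w m + w m'" using g(2) wadd by metis
  moreover have "w g \<le> w m" using m g by auto
  ultimately have "w m' \<le> w h" by (metis add_le_cancel_left add.commute add_right_mono order_trans add_le_imp_le_right)
  moreover have "w g' \<le> w m'" using m'(2) g' by (auto simp: Gy_def)
  ultimately show ?thesis by simp
qed

end



lemma Oz_zero: "\<phi> \<in> Oz \<iota> \<Longrightarrow> \<phi> 0 = 0"
  using Oz_props(2)[of \<phi> \<iota> 0 0] by simp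

lemma Oz_sum: "\<phi> \<in> Oz \<iota> \<Longrightarrow> \<phi> (sum f A) = (\<Sum>x\<in>A. \<phi> (f x))"
  by (induction A rule: infinite_finite_induct) (simp_all add: Oz_zero Oz_props(2))

lemma phi_hom:
  fixes \<iota> :: "'k::field \<Rightarrow> 'a::ring_1" and Ag :: "'g::ab_group_add \<Rightarrow> 'a set"
    and w :: "'g \<Rightarrow> 'o::linordered_ab_group_add"
  assumes P: "prime_ring TYPE('a)" and fin: "finite_over_center TYPE('a)" and phi: "\<phi> \<in> Oz \<iota>"
    and gr: "graded_algebra \<iota> Ag" and dom: "is_domain TYPE('a)"
    and wadd: "\<And>g h. w (g + h) = w g + w h" and winj: "inj w"
    and x: "x \<in> Ag h"
  shows "\<phi> x \<in> Ag h"
proof (cases "x = 0")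
  case True
  then show ?thesis using Oz_zero[OF phi] Ag0[OF gr] by simp
next
  case False
  obtain a where a: "a \<noteq> 0" "\<And>x. a * \<phi> x = x * a" using part1_core[OF P fin phi] by blast
  have y: "\<phi> x \<noteq> 0"
  proof
    assume "\<phi> x = 0"
    then have "\<phi> x = \<phi> 0" using Oz_zero[OF phi] by simp
    then have "x = 0" using Oz_props(1)[OF phi] by (simp add: bij_def inj_eq)
    then show False using False by simp
  qed
  have eq: "x * a = a * \<phi> x" using a(2)[of x] by simp
  have "g' = h" if g': "dec Ag (\<phi> x) g' \<noteq> 0" for g'
  proof -
    have "w g' \<le> w h" using key_bound[OF gr dom wadd winj x False a(1) y eq g'] .
    moreover have "- w g' \<le> - w h"
      using key_bound[OF gr dom, of "\<lambda>g. - w g"] wadd winj x False a(1) y eq g'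
      by (simp add: inj_def)
    ultimately have "w g' = w h" by simp
    then show ?thesis using winj by (simp add: inj_eq)
  qed
  then show ?thesis using dec_zero_imp_homog[OF gr] by blast
qed

lemma part2:
  fixes \<iota> :: "'k::field \<Rightarrow> 'a::ring_1" and Ag :: "'g::linordered_ab_group_add \<Rightarrow> 'a set"
  assumes P: "prime_ring TYPE('a)" and fin: "finite_over_center TYPE('a)" and phi: "\<phi> \<in> Oz \<iota>"
    and gr: "graded_algebra \<iota> Ag" and dom: "is_domain TYPE('a)"
  shows "\<exists>a. a \<noteq> 0 \<and> normal_elem a \<and> homogeneous Ag a \<and> (\<forall>x. a * \<phi> x = x * a)"
proof -
  obtain a where a: "a \<noteq> 0" "\<And>x. a * \<phi> x = x * a" using part1_core[OF P fin phi] by blast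
  obtain m where m: "dec Ag a m \<noteq> 0" using dec_nonzero[OF gr a(1)] by blast
  define am where "am = dec Ag a m"
  define Ga where "Ga = {g. dec Ag a g \<noteq> 0}"
  have fGa: "finite Ga" using dec_props(1)[OF gr] by (simp add: Ga_def)
  have mGa: "m \<in> Ga" using m by (simp add: Ga_def)
  have ea: "a = (\<Sum>g\<in>Ga. dec Ag a g)" using dec_props(3)[OF gr] by (simp add: Ga_def)
  have ph: "\<phi> x \<in> Ag h" if "x \<in> Ag h" for x h
    using phi_hom[OF P fin phi gr dom, of id] that by simp
  have hom: "am * \<phi> x = x * am" if xh: "x \<in> Ag h" for x h
  proof -
    have S: "{g\<in>Ga. h + g = h + m} = {m}" "{g\<in>Ga. g + h = m + h} = {m}" using mGa by auto
    have "dec Ag (x * a) (h + m) = (\<Sum>g\<in>{g\<in>Ga. h + g = h + m}. x * dec Ag a g)"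
      by (subst ea, unfold sum_distrib_left) (rule dec_sum[OF gr fGa], intro Agmult[OF gr] xh dec_props(2)[OF gr])
    also have "\<dots> = x * am" unfolding S by (simp add: am_def)
    finally have 1: "dec Ag (x * a) (h + m) = x * am" .
    have "dec Ag (a * \<phi> x) (m + h) = (\<Sum>g\<in>{g\<in>Ga. g + h = m + h}. dec Ag a g * \<phi> x)"
      by (subst ea, unfold sum_distrib_right) (rule dec_sum[OF gr fGa], intro Agmult[OF gr] ph[OF xh] dec_props(2)[OF gr])
    also have "\<dots> = am * \<phi> x" unfolding S by (simp add: am_def)
    finally have 2: "dec Ag (a * \<phi> x) (m + h) = am * \<phi> x" .
    show ?thesis using 1 2 a(2)[of x] by (simp add: add.commute)
  qed
  have all: "am * \<phi> x = x * am" for x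
  proof -
    define Gx where "Gx = {g. dec Ag x g \<noteq> 0}"
    have fGx: "finite Gx" using dec_props(1)[OF gr] by (simp add: Gx_def)
    have ex: "x = (\<Sum>g\<in>Gx. dec Ag x g)" using dec_props(3)[OF gr] by (simp add: Gx_def)
    have "am * \<phi> x = (\<Sum>g\<in>Gx. am * \<phi> (dec Ag x g))"
      by (subst ex) (simp add: Oz_sum[OF phi] sum_distrib_left)
    also have "\<dots> = (\<Sum>g\<in>Gx. dec Ag x g * am)"
      by (rule sum.cong[OF refl]) (rule hom[OF dec_props(2)[OF gr]])
    also have "\<dots> = x * am" by (subst (2) ex) (simp add: sum_distrib_right)
    finally show ?thesis .
  qed
  have am0: "am \<noteq> 0" using m by (simp add: am_def)
  have "normal_elem am" using reg_normal[OF P phi am0 all] by blast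
  moreover have "homogeneous Ag am" using dec_props(2)[OF gr] by (auto simp: homogeneous_def am_def)
  ultimately show ?thesis using am0 all by blast
qed

lemma inv_Oz:
  assumes phi: "\<phi> \<in> Oz \<iota>"
  shows "inv \<phi> \<in> Oz \<iota>"
proof -
  note op = Oz_props[OF phi]
  have b: "bij \<phi>" by (rule op(1))
  have fi: "\<phi> (inv \<phi> x) = x" for x using b by (simp add: bij_is_surj surj_f_inv_f)
  have if': "inv \<phi> (\<phi> x) = x" for x using b by (simp add: bij_is_inj inv_f_f)
  have inj: "inv \<phi> u = inv \<phi> v \<longleftrightarrow> u = v" for u v by (metis fi)
  have "inv \<phi> (x + y) = inv \<phi> x + inv \<phi> y" for x y
    by (metis fi if' op(2))
  moreover have "inv \<phi> (x * y) = inv \<phi> x * inv \<phi> y" for x y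
    by (metis fi if' op(3))
  moreover have "inv \<phi> 1 = 1" by (metis if' op(4))
  moreover have "inv \<phi> (\<iota> c * x) = \<iota> c * inv \<phi> x" for c x
  proof -
    have "\<forall>c x. \<phi> (\<iota> c * x) = \<iota> c * \<phi> x" using phi unfolding Oz_def by blast
    then have "\<phi> (\<iota> c * inv \<phi> x) = \<iota> c * \<phi> (inv \<phi> x)" by blast
    then have "\<phi> (\<iota> c * inv \<phi> x) = \<iota> c * x" using fi by simp
    then show ?thesis by (metis if')
  qed
  moreover have "inv \<phi> z = z" if "z \<in> center" for z using op(5)[OF that] by (metis if')
  moreover have "bij (inv \<phi>)" using b by (rule bij_imp_bij_inv)
  ultimately show ?thesis by (simp add: Oz_def)
qed

definition wv :: "('n::finite \<Rightarrow> nat) \<Rightarrow> int ^ 'n \<Rightarrow> int poly" where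
  "wv \<nu> v = (\<Sum>i\<in>UNIV. monom (v $ i) (\<nu> i))"

lemma wv_add: "wv \<nu> (u + v) = wv \<nu> u + wv \<nu> v"
  by (simp add: wv_def sum.distrib add_monom[symmetric])

lemma wv_coeff: "inj \<nu> \<Longrightarrow> coeff (wv \<nu> v) (\<nu> j) = v $ j"
proof -
  assume inj: "inj \<nu>"
  have "coeff (wv \<nu> v) (\<nu> j) = (\<Sum>i\<in>UNIV. if i = j then v $ i else 0)"
    unfolding wv_def coeff_sum by (rule sum.cong[OF refl]) (simp add: inj_eq[OF inj])
  also have "\<dots> = v $ j" by simp
  finally show ?thesis .
qed

lemma wv_inj: "inj \<nu> \<Longrightarrow> inj (wv \<nu>)"
  by (rule injI) (metis vec_eq_iff wv_coeff)

lemma part3: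
  fixes \<iota> :: "'k::field \<Rightarrow> 'a::ring_1" and Ag :: "int ^ 'n \<Rightarrow> 'a set"
  assumes P: "prime_ring TYPE('a)" and fin: "finite_over_center TYPE('a)"
    and gr: "graded_algebra \<iota> Ag" and dom: "is_domain TYPE('a)"
  shows "Oz_gr \<iota> Ag = Oz \<iota>"
proof -
  obtain \<nu> :: "'n \<Rightarrow> nat" where \<nu>: "inj \<nu>"
    using finite_imp_inj_to_nat_seg[of "UNIV :: 'n set"] by auto
  have wadd: "\<And>g h. wv \<nu> (g + h) = wv \<nu> g + wv \<nu> h" by (rule wv_add)
  have winj: "inj (wv \<nu>)" by (rule wv_inj[OF \<nu>])
  have "\<psi> ` Ag g = Ag g" if psi: "\<psi> \<in> Oz \<iota>" for \<psi> g
  proof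
    show "\<psi> ` Ag g \<subseteq> Ag g" using phi_hom[OF P fin psi gr dom wadd winj] by blast
    show "Ag g \<subseteq> \<psi> ` Ag g"
    proof
      fix x assume x: "x \<in> Ag g"
      have "inv \<psi> x \<in> Ag g" using phi_hom[OF P fin inv_Oz[OF psi] gr dom wadd winj x] .
      moreover have "x = \<psi> (inv \<psi> x)" using Oz_props(1)[OF psi] by (simp add: bij_is_surj surj_f_inv_f)
      ultimately show "x \<in> \<psi> ` Ag g" by blast
    qed
  qed
  then show ?thesis by (auto simp: Oz_gr_def)
qed


theorem lemma1p9:
  fixes \<iota> :: "'k::field_char_0 \<Rightarrow> 'a::ring_1"
    and \<phi> :: "'a \<Rightarrow> 'a"
  assumes "k_algebra \<iota>"
    and "prime_ring TYPE('a)"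
    and "finite_over_center TYPE('a)"
    and "\<phi> \<in> Oz \<iota>"
  shows "(\<exists>a. regular_elem a \<and> normal_elem a \<and> (\<forall>x. a * \<phi> x = x * a)) \<and>
         (\<forall>Ag :: 'g::linordered_ab_group_add \<Rightarrow> 'a set.
           graded_algebra \<iota> Ag \<longrightarrow> is_domain TYPE('a) \<longrightarrow>
           (\<exists>a. a \<noteq> 0 \<and> normal_elem a \<and> homogeneous Ag a \<and> (\<forall>x. a * \<phi> x = x * a))) \<and>
         (\<forall>Ag :: int ^ 'n \<Rightarrow> 'a set.
           graded_algebra \<iota> Ag \<longrightarrow> is_domain TYPE('a) \<longrightarrow> Oz_gr \<iota> Ag = Oz \<iota>)"
proof -
  obtain a where a: "a \<noteq> 0" "\<And>x. a * \<phi> x = x * a"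
    using part1_core[OF assms(2,3,4)] by blast
  have 1: "\<exists>a. regular_elem a \<and> normal_elem a \<and> (\<forall>x. a * \<phi> x = x * a)"
    using reg_normal[OF assms(2,4) a] a(2) by blast
  have 2: "\<forall>Ag :: 'g::linordered_ab_group_add \<Rightarrow> 'a set.
           graded_algebra \<iota> Ag \<longrightarrow> is_domain TYPE('a) \<longrightarrow>
           (\<exists>a. a \<noteq> 0 \<and> normal_elem a \<and> homogeneous Ag a \<and> (\<forall>x. a * \<phi> x = x * a))"
    using part2[OF assms(2,3,4)] by blast
  have 3: "\<forall>Ag :: int ^ 'n \<Rightarrow> 'a set.
           graded_algebra \<iota> Ag \<longrightarrow> is_domain TYPE('a) \<longrightarrow> Oz_gr \<iota> Ag = Oz \<iota>"
    using part3[OF assms(2,3)] by blast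
  show ?thesis using 1 2 3 by blast
qed

end
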